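(* Let $\epsilon>0$ and $\theta=(w,\mu,\tau)\in\Theta_k$. Then $\|\mathcal{M}_\theta-P_{\epsilon,\theta}\|_1\le\epsilon$.
   Context: $\mathcal{N}(x)=\frac{1}{\sqrt{2\pi}}e^{-x^2/2}$ is the standard Gaussian density and $T_d$ its degree-$d$ Taylor expansion around $0$. Fix $K$ such that $\int_{-2\sqrt{\log(1/\epsilon)}}^{2\sqrt{\log(1/\epsilon)}}|\mathcal{N}(x)-T_{2K\log(1/\epsilon)}(x)|\,dx<\epsilon/4$. Define the piecewise polynomial $\widetilde{P}_\epsilon(x)=T_{2K\log(1/\epsilon)}(x)$ if $x\in[-2\sqrt{\log(1/\epsilon)},2\sqrt{\log(1/\epsilon)}]$ and $\widetilde{P}_\epsilon(x)=0$ otherwise. $\Theta_k=\{(w,\mu,\tau): w\in\mathbb{R}^k, w_i\ge0,\sum_i w_i=1,\ \mu\in\mathbb{R}^k,\ \tau\in\mathbb{R}_{>0}^k\}$; for $\theta\in\Theta_k$, $\mathcal{M}_\theta(x)=\sum_{i=1}^k w_i\frac{\tau_i}{\sqrt{2\pi}}e^{-\tau_i^2(x-\mu_i)^2/2}$ and $P_{\epsilon,\theta}(x)=\sum_{i=1}^k w_i\tau_i\widetilde{P}_\epsilon(\tau_i(x-\mu_i))$. $\|g\|_1=\int|g|$. *)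

theory Defs
  imports "HOL-Analysis.Analysis"
begin

definition gauss :: "real \<Rightarrow> real" where
  "gauss x = exp (- (x\<^sup>2) / 2) / sqrt (2 * pi)"

definition taylor_gauss :: "nat \<Rightarrow> real \<Rightarrow> real" where
  "taylor_gauss d x = (\<Sum>j\<le>d. (deriv ^^ j) gauss 0 / fact j * x ^ j)"

definition taylor_deg :: "real \<Rightarrow> real \<Rightarrow> nat" where
  "taylor_deg K eps = nat \<lceil>2 * K * ln (1 / eps)\<rceil>"

definition Ptilde :: "real \<Rightarrow> real \<Rightarrow> real \<Rightarrow> real" where
  "Ptilde K eps x =
     (if x \<in> {- 2 * sqrt (ln (1 / eps)) .. 2 * sqrt (ln (1 / eps))}
      then taylor_gauss (taylor_deg K eps) x else 0)"

definition in_Theta :: "nat \<Rightarrow> (nat \<Rightarrow> real) \<Rightarrow> (nat \<Rightarrow> real) \<Rightarrow> (nat \<Rightarrow> real) \<Rightarrow> bool" where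
  "in_Theta k w \<mu> \<tau> \<longleftrightarrow>
     (\<forall>i<k. w i \<ge> 0) \<and> (\<Sum>i<k. w i) = 1 \<and> (\<forall>i<k. \<tau> i > 0)"

definition mixture :: "nat \<Rightarrow> (nat \<Rightarrow> real) \<Rightarrow> (nat \<Rightarrow> real) \<Rightarrow> (nat \<Rightarrow> real) \<Rightarrow> real \<Rightarrow> real" where
  "mixture k w \<mu> \<tau> x =
     (\<Sum>i<k. w i * \<tau> i / sqrt (2 * pi) * exp (- (\<tau> i)\<^sup>2 * (x - \<mu> i)\<^sup>2 / 2))"

definition P_mix :: "real \<Rightarrow> real \<Rightarrow> nat \<Rightarrow> (nat \<Rightarrow> real) \<Rightarrow> (nat \<Rightarrow> real) \<Rightarrow> (nat \<Rightarrow> real) \<Rightarrow> real \<Rightarrow> real" where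
  "P_mix K eps k w \<mu> \<tau> x = (\<Sum>i<k. w i * \<tau> i * Ptilde K eps (\<tau> i * (x - \<mu> i)))"

end

theory Submission
  imports Defs "HOL-Probability.Probability"
begin


lemma diffs_funpow: "(diffs ^^ j) a n = fact (n + j) / fact n * (a (n + j) :: real)"
proof (induction j arbitrary: a n)
  case 0 then show ?case by simp
next
  case (Suc j)
  have "(diffs ^^ Suc j) a n = (diffs ^^ j) (diffs a) n"
    by (simp add: funpow_Suc_right del: funpow.simps)
  also have "\<dots> = fact (n + j) / fact n * diffs a (n + j)" by (rule Suc.IH)
  also have "\<dots> = fact (n + Suc j) / fact n * a (n + Suc j)"
    by (simp add: diffs_def field_simps)
  finally show ?case .
qed

lemma deriv_powser_funpow:
  fixes a :: "nat \<Rightarrow> real"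
  assumes "\<And>x. summable (\<lambda>n. a n * x ^ n)"
  shows "(deriv ^^ j) (\<lambda>x. \<Sum>n. a n * x ^ n) = (\<lambda>x. \<Sum>n. (diffs ^^ j) a n * x ^ n)"
  using assms
proof (induction j arbitrary: a)
  case 0 then show ?case by simp
next
  case (Suc j)
  have "(deriv ^^ Suc j) (\<lambda>x. \<Sum>n. a n * x ^ n) = (deriv ^^ j) (deriv (\<lambda>x. \<Sum>n. a n * x ^ n))"
    by (simp add: funpow_Suc_right del: funpow.simps)
  also have "deriv (\<lambda>x. \<Sum>n. a n * x ^ n) = (\<lambda>x. \<Sum>n. diffs a n * x ^ n)"
    using termdiffs_strong_converges_everywhere[OF Suc.prems] by (intro ext DERIV_imp_deriv) 
  also have "(deriv ^^ j) (\<lambda>x. \<Sum>n. diffs a n * x ^ n) = (\<lambda>x. \<Sum>n. (diffs ^^ j) (diffs a) n * x ^ n)"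
    by (rule Suc.IH) (rule termdiff_converges_all[OF Suc.prems])
  finally show ?case by (simp add: funpow_Suc_right del: funpow.simps)
qed

definition gc :: "nat \<Rightarrow> real" where
  "gc j = (if even j then (-1/2) ^ (j div 2) / fact (j div 2) / sqrt (2 * pi) else 0)"

lemma gauss_sums: "(\<lambda>n. gc n * x ^ n) sums gauss x"
proof -
  have e: "(\<lambda>m. (-(x\<^sup>2)/2) ^ m / fact m) sums exp (-(x\<^sup>2)/2)"
  proof -
    have "(\<lambda>m. (-(x\<^sup>2)/2) ^ m /\<^sub>R fact m) sums exp (-(x\<^sup>2)/2)" by (rule exp_converges)
    moreover have "(\<lambda>m. (-(x\<^sup>2)/2) ^ m /\<^sub>R fact m) = (\<lambda>m. (-(x\<^sup>2)/2) ^ m / fact m)"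
      by (simp only: real_scaleR_def divide_inverse mult_ac)
    ultimately show ?thesis by simp
  qed
  hence "(\<lambda>m. (-(x\<^sup>2)/2) ^ m / fact m / sqrt (2*pi)) sums gauss x"
    unfolding gauss_def by (rule sums_divide)
  from sums_if[OF sums_zero this] have "(\<lambda>n. if even n then (-(x\<^sup>2)/2) ^ (n div 2) / fact (n div 2) / sqrt (2*pi) else 0) sums gauss x"
    by simp
  moreover have "(if even n then (-(x\<^sup>2)/2) ^ (n div 2) / fact (n div 2) / sqrt (2*pi) else 0) = gc n * x ^ n" for n
  proof (cases "even n")
    case True
    then obtain m where n: "n = 2 * m" by blast
    have p: "(-(x\<^sup>2)/2) ^ m = (-1/2) ^ m * x ^ (2*m)"
    proof -
      have "(-(x\<^sup>2)/2) = (-1/2) * x\<^sup>2" by simp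
      then have "(-(x\<^sup>2)/2) ^ m = (-1/2) ^ m * (x\<^sup>2) ^ m" by (simp only: power_mult_distrib)
      also have "(x\<^sup>2) ^ m = x ^ (2*m)" by (simp only: power_mult)
      finally show ?thesis .
    qed
    have e1: "(if even n then (-(x\<^sup>2)/2) ^ (n div 2) / fact (n div 2) / sqrt (2*pi) else 0) = (-(x\<^sup>2)/2) ^ m / fact m / sqrt (2*pi)"
      using n by simp
    have e2: "gc n * x ^ n = (-1/2) ^ m / fact m / sqrt (2*pi) * x ^ (2*m)"
      using n by (simp add: gc_def)
    have e3: "(-(x\<^sup>2)/2) ^ m / fact m / sqrt (2*pi) = (-1/2) ^ m / fact m / sqrt (2*pi) * x ^ (2*m)"
      by (simp only: p) (simp add: field_simps)
    show ?thesis unfolding e1 e2 e3 ..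
  qed (simp add: gc_def)
  ultimately show ?thesis by simp
qed

lemma gauss_eq: "gauss = (\<lambda>x. \<Sum>n. gc n * x ^ n)"
  using gauss_sums by (auto simp: sums_iff fun_eq_iff)

lemma taylor_coeff: "(deriv ^^ j) gauss 0 / fact j = gc j"
proof -
  have s: "\<And>x. summable (\<lambda>n. gc n * x ^ n)" using gauss_sums sums_summable by blast
  have "(deriv ^^ j) gauss 0 = (\<Sum>n. (diffs ^^ j) gc n * 0 ^ n)"
    by (subst gauss_eq, subst deriv_powser_funpow[OF s]) simp
  also have "\<dots> = (diffs ^^ j) gc 0" by (rule powser_zero)
  also have "\<dots> = fact j * gc j" by (simp add: diffs_funpow)
  finally show ?thesis by simp
qed




lemma taylor_gauss_alt:
  "taylor_gauss d x = (\<Sum>m<Suc (d div 2). (-1)^m * ((x\<^sup>2/2)^m / fact m)) / sqrt (2*pi)"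
proof -
  have "taylor_gauss d x = (\<Sum>j<Suc d. gc j * x ^ j)"
    unfolding taylor_gauss_def taylor_coeff lessThan_Suc_atMost ..
  also have "\<dots> = (\<Sum>j<2 * Suc (d div 2). gc j * x ^ j)"
  proof (cases "even d")
    case True
    then have "2 * Suc (d div 2) = Suc (Suc d)" by auto
    then show ?thesis using True by (simp add: gc_def)
  next
    case False
    then have "2 * Suc (d div 2) = Suc d" by presburger
    then show ?thesis by simp
  qed
  also have "\<dots> = (\<Sum>j<2 * Suc (d div 2). if even j then gc j * x ^ j else 0)"
    by (intro sum.cong) (auto simp: gc_def)
  also have "\<dots> = (\<Sum>m<Suc (d div 2). gc (2*m) * x ^ (2*m))"
    by (subst sum_split_even_odd) simp
  also have "\<dots> = (\<Sum>m<Suc (d div 2). (-1)^m * ((x\<^sup>2/2)^m / fact m) / sqrt (2*pi))"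
  proof (intro sum.cong refl)
    fix m
    have "x^(2*m) = (x\<^sup>2)^m" by (simp add: power_mult)
    then have "(-1/2::real)^m * x^(2*m) = (-1/2 * x\<^sup>2)^m" by (metis power_mult_distrib)
    also have "(-1/2 * x\<^sup>2) = (-1) * (x\<^sup>2/2)" by simp
    finally have "(-1/2::real)^m * x^(2*m) = (-1)^m * (x\<^sup>2/2)^m"
      by (simp only: power_mult_distrib)
    then show "gc (2*m) * x ^ (2*m) = (-1)^m * ((x\<^sup>2/2)^m / fact m) / sqrt (2*pi)"
      unfolding gc_def by simp
  qed
  also have "\<dots> = (\<Sum>m<Suc (d div 2). (-1)^m * ((x\<^sup>2/2)^m / fact m)) / sqrt (2*pi)"
    by (simp only: sum_divide_distrib)
  finally show ?thesis .
qed

lemma alt_bound: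
  fixes u :: real
  assumes u: "0 \<le> u" "u \<le> 1" and n: "n \<ge> 1"
  shows "\<bar>(\<Sum>i<n. (-1)^i * (u^i / fact i)) - exp (-u)\<bar> \<le> u"
proof -
  define a where "a i = u^i / fact i" for i
  have az: "a \<longlonglongrightarrow> 0"
    unfolding a_def using summable_exp[of u] summable_LIMSEQ_zero by (simp add: divide_inverse mult.commute)
  have ap: "\<And>i. 0 \<le> a i" using u by (simp add: a_def)
  have am: "\<And>i. a (Suc i) \<le> a i"
  proof -
    fix i
    have "u^(Suc i) / fact (Suc i) = (u / (Suc i)) * (u^i / fact i)" by (simp add: field_simps)
    also have "\<dots> \<le> 1 * (u^i / fact i)"
      using u by (intro mult_right_mono) auto
    finally show "a (Suc i) \<le> a i" by (simp add: a_def)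
  qed
  have dec: "a m \<le> a 1" if "m \<ge> 1" for m
    using that
  proof (induction m rule: dec_induct)
    case (step m) then show ?case using am[of m] by linarith
  qed simp
  have lim: "(\<Sum>i. (-1)^i * a i) = exp (-u)"
  proof -
    have "(\<lambda>i. (-u)^i /\<^sub>R fact i) sums exp (-u)" by (rule exp_converges)
    moreover have "(\<lambda>i. (-u)^i /\<^sub>R fact i) = (\<lambda>i. (-1)^i * a i)"
    proof
      fix i
      have "(-u)^i = (-1)^i * u^i" by (rule power_minus)
      then show "(-u)^i /\<^sub>R fact i = (-1)^i * a i"
        unfolding a_def by (simp only: real_scaleR_def divide_inverse mult_ac)
    qed
    ultimately show ?thesis by (simp add: sums_iff)
  qed
  note L = summable_Leibniz'[OF az ap am, unfolded lim]
  define S where "S n = (\<Sum>i<n. (-1)^i * a i)" for n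
  have Ssuc: "S (Suc m) = S m + (-1)^m * a m" for m by (simp add: S_def)
  show ?thesis
  proof (cases "even n")
    case True
    then obtain m where nm: "n = 2*m" by blast
    with n have m1: "m \<ge> 1" by simp
    have l1: "S (2*m) \<le> exp (-u)" using L(2)[of m] by (simp add: S_def)
    have l2: "exp (-u) \<le> S (2*m+1)" using L(4)[of m] by (simp add: S_def)
    have "S (2*m+1) = S (2*m) + a (2*m)" using Ssuc[of "2*m"] by simp
    moreover have "a (2*m) \<le> a 1" using dec m1 by simp
    moreover have "a 1 = u" by (simp add: a_def)
    moreover have "S n = S (2*m)" using nm by simp
    ultimately have "\<bar>S n - exp (-u)\<bar> \<le> u" using l1 l2 by linarith
    then show ?thesis by (simp add: S_def a_def)
  next
    case False
    then obtain m where nm: "n = 2*m+1" using oddE by blast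
    have l1: "S (2*(m+1)) \<le> exp (-u)" using L(2)[of "m+1"] by (simp add: S_def)
    have l2: "exp (-u) \<le> S (2*m+1)" using L(4)[of m] by (simp add: S_def)
    have "S (2*(m+1)) = S (2*m+1) - a (2*m+1)" using Ssuc[of "2*m+1"] by simp
    moreover have "a (2*m+1) \<le> a 1" using dec by simp
    moreover have "a 1 = u" by (simp add: a_def)
    moreover have "S n = S (2*m+1)" using nm by simp
    moreover have "S (2*(m+1)) = S (Suc (Suc (2*m)))" by simp
    ultimately have "\<bar>S n - exp (-u)\<bar> \<le> u" using l1 l2 by linarith
    then show ?thesis by (simp add: S_def a_def)
  qed
qed

lemma taylor_err:
  assumes "x\<^sup>2 \<le> 2"
  shows "\<bar>gauss x - taylor_gauss d x\<bar> \<le> x\<^sup>2 / 2 / sqrt (2*pi)"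
proof -
  have "\<bar>(\<Sum>m<Suc (d div 2). (-1)^m * ((x\<^sup>2/2)^m / fact m)) - exp (-(x\<^sup>2/2))\<bar> \<le> x\<^sup>2/2"
    using assms by (intro alt_bound) auto
  then have c1: "\<bar>(\<Sum>m<Suc (d div 2). (-1)^m * ((x\<^sup>2/2)^m / fact m)) - exp (-(x\<^sup>2/2))\<bar> / sqrt (2*pi) \<le> x\<^sup>2/2 / sqrt (2*pi)"
    by (intro divide_right_mono) auto
  moreover have c2: "\<bar>gauss x - taylor_gauss d x\<bar> = \<bar>(\<Sum>m<Suc (d div 2). (-1)^m * ((x\<^sup>2/2)^m / fact m)) - exp (-(x\<^sup>2/2))\<bar> / sqrt (2*pi)"
    unfolding taylor_gauss_alt gauss_def by (simp add: abs_minus_commute diff_divide_distrib[symmetric])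
  show ?thesis unfolding c2 by (rule c1)
qed

lemma gauss_lower: "gauss x \<ge> (1 - x\<^sup>2/2) / sqrt (2*pi)"
proof -
  have "1 + (-(x\<^sup>2)/2) \<le> exp (-(x\<^sup>2)/2)" by (rule exp_ge_add_one_self)
  then have "(1 - x\<^sup>2/2) / sqrt (2*pi) \<le> exp (-(x\<^sup>2)/2) / sqrt (2*pi)"
    by (intro divide_right_mono) auto
  then show ?thesis by (simp add: gauss_def)
qed
lemma gauss_nonneg: "gauss x \<ge> 0" by (simp add: gauss_def)



lemma cont_taylor: "continuous_on UNIV (taylor_gauss d)"
  unfolding taylor_gauss_def by (intro continuous_intros)

lemma cont_gauss: "continuous_on UNIV gauss"
  unfolding gauss_def by (intro continuous_intros) auto

lemma meas_taylor[measurable]: "taylor_gauss d \<in> borel_measurable borel"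
  by (rule borel_measurable_continuous_onI[OF cont_taylor])

lemma meas_gauss[measurable]: "gauss \<in> borel_measurable borel"
  by (rule borel_measurable_continuous_onI[OF cont_gauss])

lemma Ptilde_ind:
  "Ptilde K eps x = taylor_gauss (taylor_deg K eps) x * indicator {- 2 * sqrt (ln (1 / eps)) .. 2 * sqrt (ln (1 / eps))} x"
  unfolding Ptilde_def by (simp add: indicator_def)

lemma meas_Ptilde[measurable]: "Ptilde K eps \<in> borel_measurable borel"
  unfolding Ptilde_ind[abs_def] by measurable

lemma gauss_normal: "gauss = normal_density 0 1"
  by (simp add: fun_eq_iff gauss_def normal_density_def)

lemma nn_integral_gauss: "(\<integral>\<^sup>+x. ennreal (gauss x) \<partial>lborel) = 1"
proof -
  have "(\<integral>\<^sup>+x. ennreal (gauss x) \<partial>lborel) = ennreal (\<integral>x. gauss x \<partial>lborel)"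
    unfolding gauss_normal by (rule nn_integral_eq_integral) auto
  also have "\<dots> = 1" unfolding gauss_normal by simp
  finally show ?thesis .
qed

lemma integrable_gauss: "integrable lborel gauss"
  unfolding gauss_normal by simp




lemma affine_E:
  fixes f :: "real \<Rightarrow> real"
  assumes [measurable]: "f \<in> borel_measurable borel" and t: "t > 0"
  shows "(\<integral>\<^sup>+x. ennreal (t * f (t * (x - m))) \<partial>lborel) = (\<integral>\<^sup>+x. ennreal (f x) \<partial>lborel)"
proof -
  have "(\<integral>\<^sup>+x. ennreal (f x) \<partial>lborel) = ennreal \<bar>t\<bar> * (\<integral>\<^sup>+x. ennreal (f (- t * m + t * x)) \<partial>lborel)"
    using t by (intro nn_integral_real_affine) auto
  also have "\<dots> = (\<integral>\<^sup>+x. ennreal t * ennreal (f (t * (x - m))) \<partial>lborel)"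
    using t by (subst nn_integral_cmult) (auto simp: algebra_simps)
  also have "\<dots> = (\<integral>\<^sup>+x. ennreal (t * f (t * (x - m))) \<partial>lborel)"
    using t by (intro nn_integral_cong) (simp add: ennreal_mult')
  finally show ?thesis ..
qed

lemma mix_le:
  assumes "in_Theta k w \<mu> \<tau>"
  shows "(\<integral>\<^sup>+ x. ennreal \<bar>mixture k w \<mu> \<tau> x - P_mix K eps k w \<mu> \<tau> x\<bar> \<partial>lborel)
          \<le> (\<integral>\<^sup>+ x. ennreal \<bar>gauss x - Ptilde K eps x\<bar> \<partial>lborel)"
proof -
  define E where "E y = \<bar>gauss y - Ptilde K eps y\<bar>" for y
  have Em[measurable]: "E \<in> borel_measurable borel" unfolding E_def[abs_def] by measurable
  have E0: "E y \<ge> 0" for y by (simp add: E_def)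
  have w0: "\<And>i. i < k \<Longrightarrow> w i \<ge> 0" and ws: "(\<Sum>i<k. w i) = 1" and t0: "\<And>i. i < k \<Longrightarrow> \<tau> i > 0"
    using assms by (auto simp: in_Theta_def)
  have pt: "mixture k w \<mu> \<tau> x - P_mix K eps k w \<mu> \<tau> x =
      (\<Sum>i<k. w i * (\<tau> i * (gauss (\<tau> i * (x - \<mu> i)) - Ptilde K eps (\<tau> i * (x - \<mu> i)))))" for x
  proof -
    have g: "w i * \<tau> i / sqrt (2 * pi) * exp (- (\<tau> i)\<^sup>2 * (x - \<mu> i)\<^sup>2 / 2) = w i * (\<tau> i * gauss (\<tau> i * (x - \<mu> i)))" for i
      by (simp add: gauss_def power_mult_distrib)
    show ?thesis
      unfolding mixture_def P_mix_def g by (simp add: right_diff_distrib sum_subtractf mult.assoc)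
  qed
  have bound: "ennreal \<bar>mixture k w \<mu> \<tau> x - P_mix K eps k w \<mu> \<tau> x\<bar> \<le>
      (\<Sum>i<k. ennreal (w i) * ennreal (\<tau> i * E (\<tau> i * (x - \<mu> i))))" for x
  proof -
    have "\<bar>mixture k w \<mu> \<tau> x - P_mix K eps k w \<mu> \<tau> x\<bar> \<le> (\<Sum>i<k. \<bar>w i * (\<tau> i * (gauss (\<tau> i * (x - \<mu> i)) - Ptilde K eps (\<tau> i * (x - \<mu> i))))\<bar>)"
      unfolding pt by (rule sum_abs)
    also have "\<dots> = (\<Sum>i<k. w i * (\<tau> i * E (\<tau> i * (x - \<mu> i))))"
    proof (intro sum.cong refl)
      fix i assume "i \<in> {..<k}"
      then have "w i \<ge> 0" "\<tau> i \<ge> 0" using w0 t0 by (auto intro: less_imp_le)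
      then show "\<bar>w i * (\<tau> i * (gauss (\<tau> i * (x - \<mu> i)) - Ptilde K eps (\<tau> i * (x - \<mu> i))))\<bar> = w i * (\<tau> i * E (\<tau> i * (x - \<mu> i)))"
        by (simp add: E_def abs_mult)
    qed
    finally have "ennreal \<bar>mixture k w \<mu> \<tau> x - P_mix K eps k w \<mu> \<tau> x\<bar> \<le> ennreal (\<Sum>i<k. w i * (\<tau> i * E (\<tau> i * (x - \<mu> i))))"
      by (rule ennreal_leI)
    also have "\<dots> = (\<Sum>i<k. ennreal (w i * (\<tau> i * E (\<tau> i * (x - \<mu> i)))))"
      using w0 t0 E0 by (subst sum_ennreal) (auto, metis E0 less_imp_le mult_nonneg_nonneg t0 w0)
    also have "\<dots> = (\<Sum>i<k. ennreal (w i) * ennreal (\<tau> i * E (\<tau> i * (x - \<mu> i))))"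
      using w0 by (intro sum.cong refl) (simp add: ennreal_mult')
    finally show ?thesis .
  qed
  have "(\<integral>\<^sup>+ x. ennreal \<bar>mixture k w \<mu> \<tau> x - P_mix K eps k w \<mu> \<tau> x\<bar> \<partial>lborel)
      \<le> (\<integral>\<^sup>+ x. (\<Sum>i<k. ennreal (w i) * ennreal (\<tau> i * E (\<tau> i * (x - \<mu> i)))) \<partial>lborel)"
    by (intro nn_integral_mono bound)
  also have "\<dots> = (\<Sum>i<k. \<integral>\<^sup>+ x. ennreal (w i) * ennreal (\<tau> i * E (\<tau> i * (x - \<mu> i))) \<partial>lborel)"
    by (intro nn_integral_sum) auto
  also have "\<dots> = (\<Sum>i<k. ennreal (w i) * (\<integral>\<^sup>+ x. ennreal (\<tau> i * E (\<tau> i * (x - \<mu> i))) \<partial>lborel))"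
    by (intro sum.cong refl nn_integral_cmult) auto
  also have "\<dots> = (\<Sum>i<k. ennreal (w i) * (\<integral>\<^sup>+ x. ennreal (E x) \<partial>lborel))"
    using t0 by (intro sum.cong refl) (simp add: affine_E)
  also have "\<dots> = ennreal (\<Sum>i<k. w i) * (\<integral>\<^sup>+ x. ennreal (E x) \<partial>lborel)"
  proof -
    have "(\<Sum>i<k. ennreal (w i)) = ennreal (\<Sum>i<k. w i)"
      using w0 by (intro sum_ennreal) auto
    then show ?thesis by (simp only: sum_distrib_right[symmetric])
  qed
  also have "\<dots> = (\<integral>\<^sup>+ x. ennreal \<bar>gauss x - Ptilde K eps x\<bar> \<partial>lborel)"
    by (simp add: ws E_def)
  finally show ?thesis .
qed




lemma tail_right:
  fixes L C :: real assumes L: "L > 0" and C: "C \<ge> 0"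
  shows "(\<integral>\<^sup>+x. ennreal (C * exp (-L*x)) * indicator {L..} x \<partial>lborel) = ennreal (C * exp (-(L\<^sup>2)) / L)"
proof -
  let ?f = "\<lambda>x. ennreal (C * exp (-L*x)) * indicator {L..} x"
  have "(\<integral>\<^sup>+x. ?f x \<partial>lborel) = ennreal \<bar>1/L\<bar> * (\<integral>\<^sup>+x. ?f (L + (1/L) * x) \<partial>lborel)"
    using L by (intro nn_integral_real_affine) auto
  also have "(\<integral>\<^sup>+x. ?f (L + (1/L) * x) \<partial>lborel) = (\<integral>\<^sup>+x. ennreal (C * exp (-(L\<^sup>2))) * (ennreal (x^0 * exp (-x)) * indicator {0..} x) \<partial>lborel)"
  proof (intro nn_integral_cong)
    fix x :: real
    have e: "exp (- L * (L + 1 / L * x)) = exp (-(L\<^sup>2)) * exp (-x)"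
      using L by (simp add: exp_add[symmetric] field_simps power2_eq_square)
    have i: "indicator {L..} (L + 1 / L * x) = (indicator {0..} x :: ennreal)"
      using L by (auto simp: indicator_def field_simps)
    show "?f (L + (1/L) * x) = ennreal (C * exp (-(L\<^sup>2))) * (ennreal (x^0 * exp (-x)) * indicator {0..} x)"
      unfolding e i using C by (simp add: ennreal_mult' mult.assoc)
  qed
  also have "\<dots> = ennreal (C * exp (-(L\<^sup>2))) * (\<integral>\<^sup>+x. ennreal (x^0 * exp (-x)) * indicator {0..} x \<partial>lborel)"
    by (intro nn_integral_cmult) auto
  also have "\<dots> = ennreal (C * exp (-(L\<^sup>2)))"
    by (simp only: nn_intergal_power_times_exp_Ici) simp
  finally show ?thesis using L C by (simp add: ennreal_mult'[symmetric] field_simps)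
qed

lemma tail_left:
  fixes L C :: real assumes L: "L > 0" and C: "C \<ge> 0"
  shows "(\<integral>\<^sup>+x. ennreal (C * exp (L*x)) * indicator {..-L} x \<partial>lborel) = ennreal (C * exp (-(L\<^sup>2)) / L)"
proof -
  let ?f = "\<lambda>x. ennreal (C * exp (L*x)) * indicator {..-L} x"
  have "(\<integral>\<^sup>+x. ?f x \<partial>lborel) = ennreal \<bar>-1/L\<bar> * (\<integral>\<^sup>+x. ?f (-L + (-1/L) * x) \<partial>lborel)"
    using L by (intro nn_integral_real_affine) auto
  also have "(\<integral>\<^sup>+x. ?f (-L + (-1/L) * x) \<partial>lborel) = (\<integral>\<^sup>+x. ennreal (C * exp (-(L\<^sup>2))) * (ennreal (x^0 * exp (-x)) * indicator {0..} x) \<partial>lborel)"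
  proof (intro nn_integral_cong)
    fix x :: real
    have e: "exp (L * (-L + -1 / L * x)) = exp (-(L\<^sup>2)) * exp (-x)"
      using L by (simp add: exp_add[symmetric] field_simps power2_eq_square)
    have i: "indicator {..-L} (-L + -1 / L * x) = (indicator {0..} x :: ennreal)"
      using L by (auto simp: indicator_def field_simps)
    show "?f (-L + (-1/L) * x) = ennreal (C * exp (-(L\<^sup>2))) * (ennreal (x^0 * exp (-x)) * indicator {0..} x)"
      unfolding e i using C by (simp add: ennreal_mult' mult.assoc)
  qed
  also have "\<dots> = ennreal (C * exp (-(L\<^sup>2))) * (\<integral>\<^sup>+x. ennreal (x^0 * exp (-x)) * indicator {0..} x \<partial>lborel)"
    by (intro nn_integral_cmult) auto
  also have "\<dots> = ennreal (C * exp (-(L\<^sup>2)))"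
    by (simp only: nn_intergal_power_times_exp_Ici) simp
  finally show ?thesis using L C by (simp add: ennreal_mult'[symmetric] field_simps)
qed

lemma sqrt2pi_bounds: "2.44 < sqrt (2*pi)" "sqrt (2*pi) < 2.85"
proof -
  show "2.44 < sqrt (2*pi)" using pi_gt3 by (intro real_less_rsqrt) (simp add: power2_eq_square)
  show "sqrt (2*pi) < 2.85" using pi_less_4 by (intro real_less_lsqrt) (auto simp: power2_eq_square)
qed




lemma main_I:
  fixes eps K :: real
  assumes eps: "eps > 0"
    and H: "(\<integral>\<^sup>+ x \<in> {- 2 * sqrt (ln (1 / eps)) .. 2 * sqrt (ln (1 / eps))}.
            ennreal \<bar>gauss x - taylor_gauss (taylor_deg K eps) x\<bar> \<partial>lborel) < ennreal (eps / 4)"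
  shows "(\<integral>\<^sup>+ x. ennreal \<bar>gauss x - Ptilde K eps x\<bar> \<partial>lborel) \<le> ennreal eps"
proof -
  define L where "L = 2 * sqrt (ln (1 / eps))"
  define S where "S = {-L..L}"
  define T where "T = taylor_gauss (taylor_deg K eps)"
  define s where "s = sqrt (2*pi)"
  have s0: "s > 0" by (simp add: s_def)
  have sb: "2.44 < s" "s < 2.85" using sqrt2pi_bounds by (auto simp: s_def)
  have Pt: "Ptilde K eps x = (if x \<in> S then T x else 0)" for x
    by (simp add: Ptilde_def S_def L_def T_def)
  have Tm[measurable]: "T \<in> borel_measurable borel" unfolding T_def by measurable
  have gs: "gauss x = exp (-(x\<^sup>2)/2) / s" for x by (simp add: gauss_def s_def)
  show ?thesis
  proof (cases "eps \<ge> 1")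
    case True
    have "ln (1/eps) \<le> 0" using True eps by simp
    then have L0: "L \<le> 0" by (simp add: L_def)
    have "AE x in lborel. ennreal \<bar>gauss x - Ptilde K eps x\<bar> \<le> ennreal (gauss x)"
      using AE_lborel_singleton[of 0]
    proof eventually_elim
      case (elim x)
      then have "x \<notin> S" using L0 by (auto simp: S_def)
      then show ?case by (simp add: Pt gauss_nonneg ennreal_leI)
    qed
    then have "(\<integral>\<^sup>+ x. ennreal \<bar>gauss x - Ptilde K eps x\<bar> \<partial>lborel) \<le> (\<integral>\<^sup>+ x. ennreal (gauss x) \<partial>lborel)"
      by (rule nn_integral_mono_AE)
    also have "\<dots> = 1" by (rule nn_integral_gauss)
    also have "\<dots> \<le> ennreal eps" using True by simp
    finally show ?thesis .
  next
    case False
    define t where "t = ln (1/eps)"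
    have t0: "t > 0" using False eps by (simp add: t_def)
    have L0: "L > 0" using t0 by (simp add: L_def t_def[symmetric])
    have L2: "L\<^sup>2 = 4 * t" using t0 by (simp add: L_def t_def[symmetric] power_mult_distrib)
    have epst: "eps = exp (-t)" using eps by (simp add: t_def ln_div)
    show ?thesis
    proof (cases "L \<ge> 11/10")
      case True
      define C where "C = exp (L\<^sup>2/2) / s"
      have C0: "C \<ge> 0" using s0 by (simp add: C_def)
      have pw: "ennreal \<bar>gauss x - Ptilde K eps x\<bar> \<le>
          ennreal \<bar>gauss x - T x\<bar> * indicator S x +
          (ennreal (C * exp (-L*x)) * indicator {L..} x + ennreal (C * exp (L*x)) * indicator {..-L} x)" for x
      proof (cases "x \<in> S")
        case True
        then show ?thesis by (simp add: Pt)
      next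
        case False
        then have x: "x > L \<or> x < -L" by (auto simp: S_def)
        show ?thesis
        proof (cases "x > L")
          case True
          have "-(x\<^sup>2)/2 \<le> L\<^sup>2/2 + -L*x"
            using sum_power2_ge_zero[of 0 "x - L"] by (simp add: power2_eq_square algebra_simps)
          then have "exp (-(x\<^sup>2)/2) \<le> exp (L\<^sup>2/2) * exp (-L*x)" by (simp add: exp_add[symmetric])
          then have "gauss x \<le> C * exp (-L*x)" using s0 by (simp add: gs C_def divide_right_mono)
          then have "ennreal \<bar>gauss x - Ptilde K eps x\<bar> \<le> ennreal (C * exp (-L*x)) * indicator {L..} x"
            using True False by (simp add: Pt gauss_nonneg ennreal_leI)
          then show ?thesis by (intro add_increasing[OF zero_le] add_increasing2[OF zero_le])
        next
          case nT: False
          with x have xl: "x < -L" by simp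
          have "-(x\<^sup>2)/2 \<le> L\<^sup>2/2 + L*x"
            using sum_power2_ge_zero[of 0 "x + L"] by (simp add: power2_eq_square algebra_simps)
          then have "exp (-(x\<^sup>2)/2) \<le> exp (L\<^sup>2/2) * exp (L*x)" by (simp add: exp_add[symmetric])
          then have "gauss x \<le> C * exp (L*x)" using s0 by (simp add: gs C_def divide_right_mono)
          then have "ennreal \<bar>gauss x - Ptilde K eps x\<bar> \<le> ennreal (C * exp (L*x)) * indicator {..-L} x"
            using xl False by (simp add: Pt gauss_nonneg ennreal_leI)
          then show ?thesis by (intro add_increasing[OF zero_le] add_increasing[OF zero_le])
        qed
      qed
      have "(\<integral>\<^sup>+ x. ennreal \<bar>gauss x - Ptilde K eps x\<bar> \<partial>lborel) \<le>
          (\<integral>\<^sup>+ x. ennreal \<bar>gauss x - T x\<bar> * indicator S x +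
          (ennreal (C * exp (-L*x)) * indicator {L..} x + ennreal (C * exp (L*x)) * indicator {..-L} x) \<partial>lborel)"
        by (intro nn_integral_mono pw)
      also have "\<dots> = (\<integral>\<^sup>+ x. ennreal \<bar>gauss x - T x\<bar> * indicator S x \<partial>lborel) +
          ((\<integral>\<^sup>+ x. ennreal (C * exp (-L*x)) * indicator {L..} x \<partial>lborel) +
           (\<integral>\<^sup>+ x. ennreal (C * exp (L*x)) * indicator {..-L} x \<partial>lborel))"
        by (simp add: S_def nn_integral_add)
      also have "\<dots> = (\<integral>\<^sup>+ x. ennreal \<bar>gauss x - T x\<bar> * indicator S x \<partial>lborel) +
           ennreal (2 * (C * exp (-(L\<^sup>2)) / L))"
        unfolding tail_right[OF L0 C0] tail_left[OF L0 C0]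
        using L0 C0 by (simp add: ennreal_plus[symmetric] del: ennreal_plus)
      also have "\<dots> \<le> ennreal (eps/4) + ennreal (2 * (C * exp (-(L\<^sup>2)) / L))"
        using H by (intro add_right_mono less_imp_le) (simp add: S_def L_def T_def)
      also have "\<dots> = ennreal (eps/4 + 2 * (C * exp (-(L\<^sup>2)) / L))"
        using eps L0 C0 by (simp add: ennreal_plus)
      also have "\<dots> \<le> ennreal eps"
      proof (rule ennreal_leI)
        have "exp (L\<^sup>2/2) * exp (-(L\<^sup>2)) = exp (-t) * exp (-t)"
          by (simp add: exp_add[symmetric] L2)
        then have ce: "C * exp (-(L\<^sup>2)) = eps * eps / s" by (simp add: C_def epst)
        have "8 \<le> 3 * (s * L)"
        proof -
          have "2.44 * 1.1 \<le> s * L" using sb True by (intro mult_mono) auto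
          then show ?thesis by simp
        qed
        have e1: "eps < 1" using False by simp
        have "8 * eps * eps \<le> 8 * eps" using e1 eps by simp
        also have "\<dots> \<le> 3 * (s * L) * eps" using \<open>8 \<le> 3 * (s * L)\<close> eps by (intro mult_right_mono) auto
        finally have "8 * eps * eps \<le> 3 * (s * L) * eps" .
        then have "2 * (eps * eps / s / L) \<le> 3 * eps / 4"
          using s0 L0 by (simp add: field_simps)
        then show "eps / 4 + 2 * (C * exp (-(L\<^sup>2)) / L) \<le> eps" unfolding ce by simp
      qed
      finally show ?thesis .
    next
      case small: False
      define q where "q x = (1 - x\<^sup>2) / s" for x
      define h where "h x = gauss x - q x * indicator S x" for x
      have pw: "\<bar>gauss x - Ptilde K eps x\<bar> \<le> h x" for x
      proof (cases "x \<in> S")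
        case True
        then have "x\<^sup>2 \<le> L\<^sup>2" using L0 by (auto simp: S_def abs_le_square_iff[symmetric] abs_le_iff)
        also have "\<dots> \<le> 2"
        proof -
          have "L * L \<le> 1.1 * 1.1" using small L0 by (intro mult_mono) auto
          then show ?thesis by (simp add: power2_eq_square)
        qed
        finally have x2: "x\<^sup>2 \<le> 2" .
        have e: "\<bar>gauss x - T x\<bar> \<le> x\<^sup>2 / 2 / s" unfolding T_def s_def by (rule taylor_err[OF x2])
        have g: "gauss x \<ge> (1 - x\<^sup>2/2) / s" unfolding s_def by (rule gauss_lower)
        have d: "(1 - x\<^sup>2/2) / s - (1 - x\<^sup>2) / s = x\<^sup>2 / 2 / s" using s0 by (simp add: field_simps)
        have h1: "h x = gauss x - (1 - x\<^sup>2) / s" using True by (simp add: h_def q_def)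
        have p1: "Ptilde K eps x = T x" using True by (simp add: Pt)
        show ?thesis unfolding h1 p1 using e g d by linarith
      next
        case False
        then show ?thesis by (simp add: Pt h_def gauss_nonneg)
      qed
      have h0: "h x \<ge> 0" for x using pw[of x] by linarith
      have qc: "continuous_on UNIV q" unfolding q_def by (intro continuous_intros) (use s0 in auto)
      have qint: "integrable lborel (\<lambda>x. q x * indicator {-L..L} x)"
        by (intro borel_integrable_atLeastAtMost) (use qc continuous_on_eq_continuous_at in blast)
      have hint: "integrable lborel h"
        unfolding h_def[abs_def] S_def by (rule Bochner_Integration.integrable_diff[OF integrable_gauss qint])
      define F where "F x = (x - x^3/3) / s" for x
      have Fd: "(F has_vector_derivative q x) (at x within {-L..L})" for x
      proof -
        have "(F has_real_derivative q x) (at x within {-L..L})"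
          unfolding F_def q_def using s0 by (auto intro!: derivative_eq_intros simp: field_simps power2_eq_square)
        then show ?thesis by (simp add: has_real_derivative_iff_has_vector_derivative)
      qed
      have qI: "(\<integral>x. q x * indicator {-L..L} x \<partial>lborel) = F L - F (-L)"
      proof -
        have "(\<integral>x. indicator {-L..L} x *\<^sub>R q x \<partial>lborel) = F L - F (-L)"
          using L0 by (intro integral_FTC_atLeastAtMost Fd continuous_on_subset[OF qc]) auto
        then show ?thesis by (simp add: mult.commute)
      qed
      have "(\<integral>\<^sup>+ x. ennreal \<bar>gauss x - Ptilde K eps x\<bar> \<partial>lborel) \<le> (\<integral>\<^sup>+ x. ennreal (h x) \<partial>lborel)"
        by (intro nn_integral_mono ennreal_leI pw)
      also have "\<dots> = ennreal (\<integral>x. h x \<partial>lborel)"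
        using hint h0 by (intro nn_integral_eq_integral) auto
      also have "(\<integral>x. h x \<partial>lborel) = 1 - (F L - F (-L))"
      proof -
        have "(\<integral>x. h x \<partial>lborel) = (\<integral>x. gauss x \<partial>lborel) - (\<integral>x. q x * indicator {-L..L} x \<partial>lborel)"
          unfolding h_def S_def by (rule Bochner_Integration.integral_diff[OF integrable_gauss qint])
        also have "(\<integral>x. gauss x \<partial>lborel) = 1" unfolding gauss_normal by simp
        finally show ?thesis using qI by simp
      qed
      also have "ennreal (1 - (F L - F (-L))) \<le> ennreal eps"
      proof (rule ennreal_leI)
        have Fe: "F L - F (-L) = L * (2 - 2 * L\<^sup>2 / 3) / s"
          using s0 by (simp add: F_def field_simps power2_eq_square power3_eq_cube)
        have l2: "L\<^sup>2 \<le> 1.21"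
        proof -
          have "L * L \<le> 1.1 * 1.1" using small L0 by (intro mult_mono) auto
          then show ?thesis by (simp add: power2_eq_square)
        qed
        have a: "2 - 2 * L\<^sup>2 / 3 \<ge> 1.19" using l2 by simp
        have "L * 1.19 / 2.85 \<le> L * (2 - 2 * L\<^sup>2 / 3) / s"
        proof -
          have m1: "L * 1.19 \<le> L * (2 - 2 * L\<^sup>2 / 3)" using a L0 by (intro mult_left_mono) auto
          have "L * 1.19 / 2.85 \<le> L * 1.19 / s" using sb s0 L0 by (intro divide_left_mono) auto
          moreover have "L * 1.19 / s \<le> L * (2 - 2 * L\<^sup>2 / 3) / s"
            using \<open>L * 1.19 \<le> L * (2 - 2 * L\<^sup>2 / 3)\<close> s0 by (intro divide_right_mono) auto
          ultimately show ?thesis by linarith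
        qed
        moreover have "L\<^sup>2 / 4 \<le> L * 1.19 / 2.85"
        proof -
          have "L * L \<le> L * 1.1" using small L0 by (intro mult_left_mono) auto
          moreover have "L * 1.19 / 2.85 = (119/285) * L" by simp
          moreover have "\<And>z. z \<le> L * 1.1 \<Longrightarrow> z/4 \<le> 119/285*L" using L0 by linarith
          ultimately show ?thesis unfolding power2_eq_square by metis
        qed
        moreover have "1 - t \<le> exp (-t)" using exp_ge_add_one_self[of "-t"] by simp
        ultimately show "1 - (F L - F (-L)) \<le> eps" using Fe L2 epst by linarith
      qed
      finally show ?thesis .
    qed
  qed
qed


theorem lemma6:
  fixes eps K :: real and k :: nat and w \<mu> \<tau> :: "nat \<Rightarrow> real"
  assumes "eps > 0"
    and "(\<integral>\<^sup>+ x \<in> {- 2 * sqrt (ln (1 / eps)) .. 2 * sqrt (ln (1 / eps))}.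
            ennreal \<bar>gauss x - taylor_gauss (taylor_deg K eps) x\<bar> \<partial>lborel) < ennreal (eps / 4)"
    and "in_Theta k w \<mu> \<tau>"
  shows "(\<integral>\<^sup>+ x. ennreal \<bar>mixture k w \<mu> \<tau> x - P_mix K eps k w \<mu> \<tau> x\<bar> \<partial>lborel) \<le> ennreal eps"
  using mix_le[OF assms(3)] main_I[OF assms(1,2)] by (rule order_trans)

end
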